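(* Let $|p|<1$ and let $(a_k)_{k\in\mathbb Z},(b_k),(c_k),(d_k),(e_k),(f_k),(g_k)$ be sequences of nonzero complex numbers with $a_k^3=b_kc_kd_ke_kf_kg_k$ for all $k$, such that all expressions below are well defined and such that $$z_k:=\frac{\theta\big(b_k,c_k,d_k,e_k,f_k,a_k^3/(b_kc_kd_ke_kf_k);p\big)}{\theta\big(a_k/b_k,a_k/c_k,a_k/d_k,a_k/e_k,a_k/f_k,b_kc_kd_ke_kf_k/a_k^2;p\big)}$$ satisfies $\operatorname{Re} z_k>0$ for all integers $k$ and $\sum_{k=-\infty}^\infty\log z_k$ converges (principal branch of the logarithm). Then \begin{align*} &\sum_{k=-\infty}^\infty\frac{\theta\big(a_k,\,a_k/(e_kf_k),\,a_k^2/(b_kc_kd_ke_k),\,a_k^2/(b_kc_kd_kf_k);p\big)}{\theta\big(a_k^2/(b_kc_kd_ke_kf_k),\,a_k^2/(b_kc_kd_k),\,a_k/f_k,\,a_k/e_k;p\big)}\prod_{j=0}^{k-1}z_j\\ &\quad\times\Bigg[1-\frac{\theta\big(a_k/(b_kc_k),a_k/(b_kd_k),a_k/(c_kd_k);p\big)}{\theta\big(a_k/d_k,a_k/c_k,a_k/b_k;p\big)}\cdot\frac{\theta(e_k,f_k,g_k;p)}{\theta\big(a_k^2/(b_kc_kd_ke_k),a_k^2/(b_kc_kd_kf_k),a_k^2/(b_kc_kd_kg_k);p\big)}\Bigg]\\ &=\prod_{k=-\infty}^{-1}\frac1{z_k}-\prod_{k=0}^\infty z_k. \end{align*}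
   Context: For $|p|<1$ and $x\neq 0$, $\theta(x;p)=(x;p)_\infty(p/x;p)_\infty$ where $(x;p)_\infty=\prod_{k\ge 0}(1-xp^k)$, and $\theta(x_1,\dots,x_m;p)=\prod_{i=1}^m\theta(x_i;p)$. Generalized products: $\prod_{j=0}^{k-1}z_j=z_0\cdots z_{k-1}$ for $k\ge1$, $=1$ for $k=0$, and $=(z_kz_{k+1}\cdots z_{-1})^{-1}$ for $k\le -1$. The bilateral sum means $\lim_{m,n\to\infty}\sum_{k=-m}^n$. *)

theory Defs
  imports "HOL-Analysis.Analysis"
begin

definition qpoch_inf :: "complex \<Rightarrow> complex \<Rightarrow> complex" where
  "qpoch_inf x p = (\<Prod>k. 1 - x * p ^ k)"

definition theta :: "complex \<Rightarrow> complex \<Rightarrow> complex" where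
  "theta x p = qpoch_inf x p * qpoch_inf (p / x) p"

definition thetas :: "complex list \<Rightarrow> complex \<Rightarrow> complex" where
  "thetas xs p = prod_list (map (\<lambda>x. theta x p) xs)"

definition gprod :: "(int \<Rightarrow> complex) \<Rightarrow> int \<Rightarrow> complex" where
  "gprod z k = (if k \<ge> 0 then (\<Prod>j\<in>{0..<k}. z j)
                else inverse (\<Prod>j\<in>{k..-1}. z j))"

definition bilateral_sums :: "(int \<Rightarrow> complex) \<Rightarrow> complex \<Rightarrow> bool" where
  "bilateral_sums f S \<longleftrightarrow>
     ((\<lambda>(m::nat, n::nat). \<Sum>k\<in>{- int m..int n}. f k) \<longlongrightarrow> S)
       (sequentially \<times>\<^sub>F sequentially)"

end

theory Submission
  imports Defs "HOL-Complex_Analysis.Complex_Analysis"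
begin


lemma qp_conv:
  assumes "norm p < 1"
  shows "convergent_prod (\<lambda>k. 1 - x * p ^ k :: complex)"
proof -
  have "summable (\<lambda>k. norm x * norm p ^ k)"
    using assms by (intro summable_mult summable_geometric) auto
  hence "summable (\<lambda>k. norm ((1 - x * p ^ k) - 1))"
    by (simp add: norm_mult norm_power)
  hence "abs_convergent_prod (\<lambda>k. 1 - x * p ^ k)"
    by (rule summable_imp_abs_convergent_prod)
  thus ?thesis by (rule abs_convergent_prod_imp_convergent_prod)
qed

lemma qp_has:
  assumes "norm p < 1"
  shows "(\<lambda>k. 1 - x * p ^ k) has_prod qpoch_inf x p"
  unfolding qpoch_inf_def using qp_conv[OF assms] by blast

lemma qp_zero_iff:
  assumes "norm p < 1"
  shows "qpoch_inf x p = 0 \<longleftrightarrow> (\<exists>k. x * p ^ k = 1)"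
proof -
  have "qpoch_inf x p = 0 \<longleftrightarrow> 0 \<in> range (\<lambda>k. 1 - x * p ^ k)"
    by (rule has_prod_eq_0_iff[OF qp_has[OF assms, of x]])
  also have "\<dots> \<longleftrightarrow> (\<exists>k. x * p ^ k = 1)"
    by (metis (mono_tags, lifting) eq_iff_diff_eq_0 rangeE rangeI)
  finally show ?thesis .
qed

lemma qp_shift:
  assumes "norm p < 1"
  shows "qpoch_inf x p = (1 - x) * qpoch_inf (x * p) p"
proof (cases "x = 1")
  case True
  then have "qpoch_inf x p = 0" using qp_zero_iff[OF assms, of x] by (metis mult_1_right power_0)
  then show ?thesis using True by simp
next
  case False
  have "(\<lambda>n. (\<lambda>k. 1 - x * p ^ k) (Suc n)) has_prod qpoch_inf (x * p) p"
    using qp_has[OF assms, of "x * p"] by (simp add: mult_ac)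
  hence "(\<lambda>k. 1 - x * p ^ k) has_prod (qpoch_inf (x * p) p * (1 - x))"
    using has_prod_Suc_iff[of "\<lambda>k. 1 - x * p ^ k"] False by simp
  then show ?thesis using has_prod_unique2[OF _ qp_has[OF assms]] by (simp add: mult_ac)
qed

lemma qp_zero: "norm p < 1 \<Longrightarrow> qpoch_inf 0 p = 1"
  unfolding qpoch_inf_def by simp

lemma theta_p0: "theta x 0 = 1 - x"
proof -
  have "qpoch_inf x 0 = 1 - x" using qp_shift[of 0 x] qp_zero[of 0] by simp
  moreover have "qpoch_inf (0 / x) 0 = 1" using qp_zero[of 0] by simp
  ultimately show ?thesis by (simp add: theta_def)
qed

lemma theta_inv:
  assumes "norm p < 1" "x \<noteq> 0"
  shows "theta (1 / x) p = - (1 / x) * theta x p"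
proof -
  define A where "A = qpoch_inf (p * x) p * qpoch_inf (p / x) p"
  have s1: "qpoch_inf (1/x) p = (1 - 1/x) * qpoch_inf (p / x) p"
    using qp_shift[OF assms(1), of "1/x"] by simp
  have s2: "qpoch_inf x p = (1 - x) * qpoch_inf (p * x) p"
    using qp_shift[OF assms(1), of x] by (simp add: mult.commute)
  have 1: "theta (1/x) p = (1 - 1/x) * A"
    unfolding theta_def s1 A_def by simp
  have 2: "theta x p = (1 - x) * A"
    unfolding theta_def s2 A_def by simp
  have 3: "(1 - 1/x) = - (1/x) * (1 - x)" using assms(2) by (simp add: field_simps)
  show ?thesis unfolding 1 2 3 by simp
qed

lemma theta_mulp:
  assumes "norm p < 1" "x \<noteq> 0" "p \<noteq> 0"
  shows "theta (p * x) p = - (1 / x) * theta x p"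
proof -
  have "theta (p * x) p = qpoch_inf (p * x) p * qpoch_inf (1 / x) p"
    using assms by (simp add: theta_def)
  also have "\<dots> = theta (1/x) p" using assms by (simp add: theta_def mult_ac)
  finally show ?thesis using theta_inv[OF assms(1,2)] by simp
qed


lemma qp_holo:
  assumes p: "norm p < 1"
  shows "(\<lambda>z. qpoch_inf z p) holomorphic_on A"
proof (rule holomorphic_on_subset)
  define P where "P = (\<lambda>N z. \<Prod>n<N. 1 - z * p ^ n)"
  have ulim: "uniform_limit (cball 0 R) P (\<lambda>z. qpoch_inf z p) sequentially" if R: "R > 0" for R
  proof -
    have "uniformly_convergent_on (cball 0 R) P"
      unfolding P_def
    proof (rule uniformly_convergent_on_prod')
      show "uniformly_convergent_on (cball 0 R) (\<lambda>N z. \<Sum>n<N. norm (1 - z * p ^ n - 1))"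
      proof (rule Weierstrass_m_test')
        fix n and z :: complex assume "z \<in> cball 0 R"
        hence "norm z \<le> R" by simp
        thus "norm (norm (1 - z * p ^ n - 1)) \<le> R * norm p ^ n"
          by (simp add: norm_mult norm_power mult_right_mono)
      next
        show "summable (\<lambda>n. R * norm p ^ n)"
          using p by (intro summable_mult summable_geometric) auto
      qed
    qed (auto intro!: continuous_intros)
    then obtain g where g: "uniform_limit (cball 0 R) P g sequentially"
      by (auto simp: uniformly_convergent_on_def)
    also have "?this \<longleftrightarrow> uniform_limit (cball 0 R) P (\<lambda>z. qpoch_inf z p) sequentially"
    proof (intro uniform_limit_cong)
      fix z :: complex assume "z \<in> cball 0 R"
      with g have "(\<lambda>n. P n z) \<longlonglongrightarrow> g z"
        by (metis tendsto_uniform_limitI)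
      moreover have "(\<lambda>n. P n z) \<longlonglongrightarrow> qpoch_inf z p"
        unfolding P_def by (rule has_prod_imp_tendsto'[OF qp_has[OF p]])
      ultimately show "g z = qpoch_inf z p"
        using tendsto_unique by force
    qed auto
    finally show ?thesis .
  qed
  show "(\<lambda>z. qpoch_inf z p) holomorphic_on UNIV"
  proof (rule holomorphic_uniform_sequence)
    fix z :: complex
    have *: "uniform_limit (cball 0 (norm z + 1)) P (\<lambda>z. qpoch_inf z p) sequentially"
      by (rule ulim) (auto intro: add_nonneg_pos)
    hence "uniform_limit (cball z 1) P (\<lambda>z. qpoch_inf z p) sequentially"
      by (rule uniform_limit_on_subset) (simp add: cball_subset_cball_iff)
    thus "\<exists>d>0. cball z d \<subseteq> UNIV \<and> uniform_limit (cball z d) P (\<lambda>z. qpoch_inf z p) sequentially"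
      by (intro exI[of _ 1]) auto
  qed (auto intro!: holomorphic_intros simp: P_def)
qed auto

lemma theta_holo:
  assumes p: "norm p < 1"
  shows "(\<lambda>z. theta z p) holomorphic_on (- {0})"
proof -
  have "(\<lambda>z. qpoch_inf z p * qpoch_inf (p / z) p) holomorphic_on (- {0})"
    by (intro holomorphic_intros holomorphic_on_compose[OF _ qp_holo[OF p], unfolded o_def]) auto
  thus ?thesis unfolding theta_def .
qed


lemma open_nz: "open (- {0::complex})"
  by (simp add: open_Compl)

lemma deriv_funeq:
  fixes F c :: "complex \<Rightarrow> complex"
  assumes hF: "F holomorphic_on - {0}" and hc: "c holomorphic_on - {0}" and p: "p \<noteq> 0"
    and eq: "\<And>x. x \<noteq> 0 \<Longrightarrow> F (p * x) = c x * F x" and x: "x \<noteq> 0"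
  shows "p * deriv F (p * x) = deriv c x * F x + c x * deriv F x"
proof -
  have dF: "(F has_field_derivative deriv F (p * x)) (at (p * x))"
    by (rule holomorphic_derivI[OF hF open_nz]) (use p x in auto)
  have dl: "((\<lambda>x. p * x) has_field_derivative p) (at x)"
    by (auto intro!: derivative_eq_intros)
  have d1: "((\<lambda>x. F (p * x)) has_field_derivative deriv F (p * x) * p) (at x)"
    by (rule DERIV_chain2[OF dF dl])
  have d2: "((\<lambda>x. F (p * x)) has_field_derivative deriv F (p * x) * p) (at x)"
    by (rule d1)
  have dc: "(c has_field_derivative deriv c x) (at x)"
    by (rule holomorphic_derivI[OF hc open_nz]) (use x in auto)
  have dF2: "(F has_field_derivative deriv F x) (at x)"
    by (rule holomorphic_derivI[OF hF open_nz]) (use x in auto)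
  have d3: "((\<lambda>x. c x * F x) has_field_derivative deriv c x * F x + deriv F x * c x) (at x)"
    by (rule DERIV_mult[OF dc dF2])
  have d4: "((\<lambda>x. c x * F x) has_field_derivative deriv F (p * x) * p) (at x)"
    by (rule has_field_derivative_transform_within_open[OF d1 open_nz]) (use x eq in auto)
  from DERIV_unique[OF d3 d4] show ?thesis by (simp add: mult_ac)
qed

lemma theta_zeros:
  assumes p1: "norm p < 1" and p: "p \<noteq> 0" and x: "x \<noteq> 0" and t: "theta x p = 0"
  shows "x \<in> range (power_int p)"
proof -
  from t have "qpoch_inf x p = 0 \<or> qpoch_inf (p / x) p = 0" by (simp add: theta_def)
  thus ?thesis
  proof
    assume "qpoch_inf x p = 0"
    then obtain k where k: "x * p ^ k = 1" using qp_zero_iff[OF p1] by blast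
    hence "x = p powi (- int k)" using p by (simp add: power_int_minus field_simps)
    thus ?thesis by blast
  next
    assume "qpoch_inf (p / x) p = 0"
    then obtain k where k: "p / x * p ^ k = 1" using qp_zero_iff[OF p1] by blast
    hence "x = p ^ Suc k" using x by (simp add: field_simps)
    hence "x = p powi (int (Suc k))" using power_int_of_nat[of p "Suc k"] by simp
    thus ?thesis by blast
  qed
qed

lemma qp_p_nz:
  assumes p1: "norm p < 1"
  shows "qpoch_inf p p \<noteq> 0"
proof -
  have "1 - p * p ^ k \<noteq> 0" for k
  proof
    assume "1 - p * p ^ k = 0"
    hence "norm (p ^ Suc k) = 1" by (simp add: algebra_simps)
    moreover have "norm p ^ Suc k < 1"
      using p1 by (subst power_less_one_iff) auto
    hence "norm (p ^ Suc k) < 1" by (simp only: norm_power)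
    ultimately show False by simp
  qed
  thus ?thesis unfolding qpoch_inf_def by (intro prodinf_nonzero qp_conv p1)
qed

lemma theta_1: "norm p < 1 \<Longrightarrow> theta 1 p = 0"
  using qp_zero_iff[of p 1] by (auto simp: theta_def intro: exI[of _ 0])

lemma theta_deriv1:
  assumes p1: "norm p < 1"
  shows "deriv (\<lambda>z. theta z p) 1 = - (qpoch_inf p p * qpoch_inf p p)"
proof -
  define H where "H = (\<lambda>z. qpoch_inf (z * p) p * qpoch_inf (p / z) p)"
  have hH: "H holomorphic_on - {0}" unfolding H_def
    by (intro holomorphic_intros holomorphic_on_compose[OF _ qp_holo[OF p1], unfolded o_def]) auto
  have dH: "(H has_field_derivative deriv H 1) (at 1)"
    by (rule holomorphic_derivI[OF hH open_nz]) auto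
  have d: "((\<lambda>z. (1 - z) * H z) has_field_derivative (- 1) * H 1 + deriv H 1 * (1 - 1)) (at 1)"
    by (rule DERIV_mult[OF _ dH]) (auto intro!: derivative_eq_intros)
  have d2: "((\<lambda>z. theta z p) has_field_derivative (- 1) * H 1 + deriv H 1 * (1 - 1)) (at 1)"
  proof (rule has_field_derivative_transform_within_open[OF d open_nz])
    fix z :: complex
    show "(1 - z) * H z = theta z p"
      unfolding theta_def H_def qp_shift[OF p1, of z] by (simp add: mult_ac)
  qed auto
  have "H 1 = qpoch_inf p p * qpoch_inf p p" by (simp add: H_def)
  with DERIV_imp_deriv[OF d2] show ?thesis by simp
qed


lemma inv_holo: "(\<lambda>x::complex. - (1 / x)) holomorphic_on - {0}"
  by (intro holomorphic_intros) auto

lemma theta_pow: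
  assumes p1: "norm p < 1" and p: "p \<noteq> 0"
  shows "theta (p powi k) p = 0 \<and> deriv (\<lambda>z. theta z p) (p powi k) \<noteq> 0"
proof (induct k rule: int_induct[where k=0])
  case base
  show ?case using theta_1[OF p1] theta_deriv1[OF p1] qp_p_nz[OF p1] by simp
next
  case (step1 i)
  define w where "w = p powi i"
  have w: "w \<noteq> 0" using p by (simp add: w_def)
  have e: "p powi (i + 1) = p * w" using p by (simp add: w_def power_int_add_1')
  have d: "p * deriv (\<lambda>z. theta z p) (p * w) = deriv (\<lambda>x. - (1 / x)) w * theta w p + - (1 / w) * deriv (\<lambda>z. theta z p) w"
    by (rule deriv_funeq[OF theta_holo[OF p1] inv_holo p theta_mulp[OF p1 _ p] w])
  have "theta (p * w) p = 0" using theta_mulp[OF p1 w p] step1 by (simp add: w_def)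
  moreover have "deriv (\<lambda>z. theta z p) (p * w) \<noteq> 0"
    using d step1 w p by (auto simp: w_def)
  ultimately show ?case by (simp add: e)
next
  case (step2 i)
  define w where "w = p powi (i - 1)"
  have w: "w \<noteq> 0" using p by (simp add: w_def)
  have e: "p powi i = p * w" using p power_int_minus_mult[of p i] by (simp add: w_def mult.commute)
  have d: "p * deriv (\<lambda>z. theta z p) (p * w) = deriv (\<lambda>x. - (1 / x)) w * theta w p + - (1 / w) * deriv (\<lambda>z. theta z p) w"
    by (rule deriv_funeq[OF theta_holo[OF p1] inv_holo p theta_mulp[OF p1 _ p] w])
  have "theta (p * w) p = - (1 / w) * theta w p" using theta_mulp[OF p1 w p] .
  hence t: "theta w p = 0" using step2 w by (simp add: e)
  moreover have "deriv (\<lambda>z. theta z p) w \<noteq> 0"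
    using d step2 w p t by (auto simp: e)
  ultimately show ?case by (simp add: w_def)
qed



lemma div_holo:
  fixes F D :: "complex \<Rightarrow> complex"
  assumes S: "open S" and hF: "F holomorphic_on S" and hD: "D holomorphic_on S"
    and z: "\<And>z. z \<in> S \<Longrightarrow> D z = 0 \<Longrightarrow> F z = 0 \<and> deriv D z \<noteq> 0"
  shows "(\<lambda>x. if D x = 0 then deriv F x / deriv D x else F x / D x) holomorphic_on S"
  unfolding holomorphic_on_open[OF S]
proof
  fix x0 assume x0: "x0 \<in> S"
  define R where "R = (\<lambda>x. if D x = 0 then deriv F x / deriv D x else F x / D x)"
  show "\<exists>f'. (R has_field_derivative f') (at x0)"
  proof (cases "D x0 = 0")
    case False
    define S' where "S' = S \<inter> D -` (- {0})"
    have oS': "open S'" unfolding S'_def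
      by (intro continuous_open_preimage holomorphic_on_imp_continuous_on hD S open_nz)
    have x0S': "x0 \<in> S'" using x0 False by (auto simp: S'_def)
    have dF: "(F has_field_derivative deriv F x0) (at x0)"
      by (rule holomorphic_derivI[OF hF S x0])
    have dD: "(D has_field_derivative deriv D x0) (at x0)"
      by (rule holomorphic_derivI[OF hD S x0])
    have "((\<lambda>x. F x / D x) has_field_derivative
            (deriv F x0 * D x0 - F x0 * deriv D x0) / (D x0 * D x0)) (at x0)"
      by (rule DERIV_divide[OF dF dD False])
    hence "(R has_field_derivative
            (deriv F x0 * D x0 - F x0 * deriv D x0) / (D x0 * D x0)) (at x0)"
      by (rule has_field_derivative_transform_within_open[OF _ oS' x0S']) (auto simp: R_def S'_def)
    thus ?thesis by blast
  next
    case True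
    define F1 where "F1 = (\<lambda>z. if z = x0 then deriv F x0 else (F z - F x0) / (z - x0))"
    define D1 where "D1 = (\<lambda>z. if z = x0 then deriv D x0 else (D z - D x0) / (z - x0))"
    have hF1: "F1 holomorphic_on S" unfolding F1_def by (rule pole_lemma_open[OF hF S])
    have hD1: "D1 holomorphic_on S" unfolding D1_def by (rule pole_lemma_open[OF hD S])
    have F0: "F x0 = 0" and dD0: "deriv D x0 \<noteq> 0" using z[OF x0 True] by auto
    define S' where "S' = S \<inter> D1 -` (- {0})"
    have oS': "open S'" unfolding S'_def
      by (intro continuous_open_preimage holomorphic_on_imp_continuous_on hD1 S open_nz)
    have x0S': "x0 \<in> S'" using x0 dD0 by (auto simp: S'_def D1_def)
    have dF: "(F1 has_field_derivative deriv F1 x0) (at x0)"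
      by (rule holomorphic_derivI[OF hF1 S x0])
    have dD: "(D1 has_field_derivative deriv D1 x0) (at x0)"
      by (rule holomorphic_derivI[OF hD1 S x0])
    have D10: "D1 x0 \<noteq> 0" using dD0 by (simp add: D1_def)
    have "((\<lambda>x. F1 x / D1 x) has_field_derivative
            (deriv F1 x0 * D1 x0 - F1 x0 * deriv D1 x0) / (D1 x0 * D1 x0)) (at x0)"
      by (rule DERIV_divide[OF dF dD D10])
    moreover have "F1 x / D1 x = R x" if "x \<in> S'" for x
    proof (cases "x = x0")
      case True
      then show ?thesis using \<open>D x0 = 0\<close> by (simp add: F1_def D1_def R_def)
    next
      case False
      have "D1 x \<noteq> 0" using that by (auto simp: S'_def)
      hence "D x \<noteq> 0" using False \<open>D x0 = 0\<close> by (auto simp: D1_def)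
      then show ?thesis using False \<open>D x0 = 0\<close> F0 by (simp add: F1_def D1_def R_def)
    qed
    ultimately have "(R has_field_derivative
            (deriv F1 x0 * D1 x0 - F1 x0 * deriv D1 x0) / (D1 x0 * D1 x0)) (at x0)"
      by (rule has_field_derivative_transform_within_open[OF _ oS' x0S'])
    thus ?thesis by blast
  qed
qed


lemma annulus_reach:
  fixes x p :: complex
  assumes p: "p \<noteq> 0" "norm p < 1" and x: "x \<noteq> 0"
  shows "\<exists>y n. norm p \<le> norm y \<and> norm y \<le> 1 \<and> (y = p ^ n * x \<or> x = p ^ n * y)"
proof -
  define r where "r = norm p"
  have r: "0 < r" "r < 1" using p by (auto simp: r_def)
  have xpos: "norm x > 0" using x by simp
  consider "norm x > 1" | "norm x < r" | "r \<le> norm x \<and> norm x \<le> 1" by linarith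
  thus ?thesis
  proof cases
    case 3
    then show ?thesis by (intro exI[of _ x] exI[of _ 0]) (auto simp: r_def)
  next
    case 1
    have ex: "\<exists>n. r ^ n * norm x \<le> 1"
    proof -
      obtain n where "r ^ n < 1 / norm x" using real_arch_pow_inv[of "1 / norm x" r] r xpos by auto
      thus ?thesis using xpos by (intro exI[of _ n]) (simp add: field_simps)
    qed
    define n where "n = (LEAST n. r ^ n * norm x \<le> 1)"
    have n1: "r ^ n * norm x \<le> 1" unfolding n_def by (rule LeastI_ex[OF ex])
    have n0: "n \<noteq> 0"
    proof
      assume "n = 0" with n1 have "norm x \<le> 1" by simp
      with 1 show False by simp
    qed
    then obtain m where m: "n = Suc m" by (cases n) auto
    have "\<not> r ^ m * norm x \<le> 1" using not_less_Least[of m "\<lambda>n. r ^ n * norm x \<le> 1"] m n_def by auto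
    hence "r ^ m * norm x > 1" by simp
    hence "r * (r ^ m * norm x) > r * 1" using r by (intro mult_strict_left_mono) auto
    hence "r ^ n * norm x \<ge> r" using m by (simp add: mult_ac)
    then show ?thesis using n1
      by (intro exI[of _ "p ^ n * x"] exI[of _ n]) (auto simp: norm_mult norm_power r_def)
  next
    case 2
    have ex: "\<exists>n. r ^ Suc n \<le> norm x"
    proof -
      obtain n where "r ^ n < norm x" using real_arch_pow_inv[of "norm x" r] r xpos by auto
      moreover have "r ^ Suc n \<le> r ^ n" using r by (simp add: power_decreasing)
      ultimately show ?thesis by (intro exI[of _ n]) simp
    qed
    define n where "n = (LEAST n. r ^ Suc n \<le> norm x)"
    have n1: "r ^ Suc n \<le> norm x" unfolding n_def by (rule LeastI_ex[OF ex])
    have n2: "norm x < r ^ n"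
    proof (cases n)
      case 0 then show ?thesis using 2 r by simp
    next
      case (Suc m)
      have "\<not> r ^ Suc m \<le> norm x" using not_less_Least[of m "\<lambda>n. r ^ Suc n \<le> norm x"] Suc n_def by auto
      then show ?thesis using Suc by simp
    qed
    define y where "y = x / p ^ n"
    have xy: "x = p ^ n * y" using p by (simp add: y_def)
    have ny: "norm y = norm x / r ^ n" by (simp add: y_def norm_divide norm_power r_def)
    have rn: "r ^ n > 0" using r by simp
    have "norm y \<le> 1" using n2 rn by (simp add: ny)
    moreover have "r \<le> norm y" using n1 rn by (simp add: ny field_simps mult.commute)
    ultimately show ?thesis using xy by (intro exI[of _ y] exI[of _ n]) (auto simp: r_def)
  qed
qed

lemma liouville_per:
  fixes R :: "complex \<Rightarrow> complex"
  assumes p: "p \<noteq> 0" "norm p < 1" and hR: "R holomorphic_on - {0}"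
    and per: "\<And>x. x \<noteq> 0 \<Longrightarrow> R (p * x) = R x"
  shows "\<exists>c. \<forall>x. x \<noteq> 0 \<longrightarrow> R x = c"
proof -
  define K where "K = {x::complex. norm p \<le> norm x \<and> norm x \<le> 1}"
  have cK: "compact K"
  proof -
    have "closed K" unfolding K_def by (intro closed_Collect_conj closed_Collect_le continuous_intros)
    moreover have "bounded K" unfolding K_def bounded_iff by auto
    ultimately show ?thesis by (simp add: compact_eq_bounded_closed)
  qed
  have K0: "K \<subseteq> - {0}" using p by (auto simp: K_def)
  have "compact (R ` K)"
    by (rule compact_continuous_image[OF continuous_on_subset[OF holomorphic_on_imp_continuous_on[OF hR] K0] cK])
  then obtain M where M: "\<And>y. y \<in> K \<Longrightarrow> norm (R y) \<le> M"
    using compact_imp_bounded[of "R ` K"] unfolding bounded_iff by auto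
  have pern: "R (p ^ n * x) = R x" if "x \<noteq> 0" for n x
  proof (induct n)
    case (Suc n)
    have "R (p ^ Suc n * x) = R (p * (p ^ n * x))" by (simp add: mult_ac)
    also have "\<dots> = R (p ^ n * x)" using per[of "p ^ n * x"] p that by simp
    finally show ?case using Suc by simp
  qed simp
  have bnd: "norm (R x) \<le> M" if x0: "x \<noteq> 0" for x
  proof -
    obtain y n where y: "norm p \<le> norm y" "norm y \<le> 1" and yx: "y = p ^ n * x \<or> x = p ^ n * y"
      using annulus_reach[OF p x0] by blast
    have "y \<noteq> 0" using y p by auto
    hence "R y = R x" using yx pern x0 by auto
    thus ?thesis using M[of y] y by (simp add: K_def)
  qed
  define G where "G = (\<lambda>w. R (exp w))"
  have hG: "G holomorphic_on UNIV" unfolding G_def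
    by (rule holomorphic_on_compose[OF holomorphic_on_exp, unfolded o_def, OF holomorphic_on_subset[OF hR]]) auto
  have "bounded (range G)" unfolding bounded_iff G_def using bnd exp_not_eq_zero by blast
  then obtain c where c: "\<And>w. G w = c" using Liouville_theorem[OF hG] by (auto simp: constant_on_def)
  show ?thesis
  proof (intro exI allI impI)
    fix x :: complex assume "x \<noteq> 0"
    hence "R x = G (Ln x)" by (simp add: G_def)
    thus "R x = c" using c by simp
  qed
qed


lemma pair_holo:
  assumes p1: "norm p < 1" and a: "a \<noteq> 0"
  shows "(\<lambda>x. theta (x * a) p * theta (x / a) p) holomorphic_on - {0}"
proof -
  have 1: "(\<lambda>x. theta (x * a) p) holomorphic_on - {0}"
    by (rule holomorphic_on_compose_gen[OF _ theta_holo[OF p1], unfolded o_def]) (use a in \<open>auto intro!: holomorphic_intros\<close>)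
  have 2: "(\<lambda>x. theta (x / a) p) holomorphic_on - {0}"
    by (rule holomorphic_on_compose_gen[OF _ theta_holo[OF p1], unfolded o_def]) (use a in \<open>auto intro!: holomorphic_intros\<close>)
  show ?thesis by (intro holomorphic_intros 1 2)
qed

lemma pair_p:
  assumes p1: "norm p < 1" and p: "p \<noteq> 0" and a: "a \<noteq> 0" and x: "x \<noteq> 0"
  shows "theta (p * x * a) p * theta (p * x / a) p = 1 / (x * x) * (theta (x * a) p * theta (x / a) p)"
proof -
  have xa: "x * a \<noteq> 0" "x / a \<noteq> 0" using a x by auto
  have 1: "theta (p * x * a) p = - (1 / (x * a)) * theta (x * a) p"
    using theta_mulp[OF p1 xa(1) p] by (metis mult.assoc)
  have 2: "theta (p * x / a) p = - (1 / (x / a)) * theta (x / a) p"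
    using theta_mulp[OF p1 xa(2) p] by (metis times_divide_eq_right)
  show ?thesis unfolding 1 2 using a x by (simp add: field_simps)
qed

lemma pair_deriv:
  assumes p1: "norm p < 1" and u: "u \<noteq> 0" and x: "x \<noteq> 0"
  shows "((\<lambda>x. theta (x * u) p * theta (x / u) p) has_field_derivative
     (deriv (\<lambda>z. theta z p) (x * u) * u) * theta (x / u) p + (deriv (\<lambda>z. theta z p) (x / u) * (1 / u)) * theta (x * u) p) (at x)"
proof -
  have d1: "((\<lambda>z. theta z p) has_field_derivative deriv (\<lambda>z. theta z p) (x * u)) (at (x * u))"
    by (rule holomorphic_derivI[OF theta_holo[OF p1] open_nz]) (use u x in auto)
  have d2: "((\<lambda>z. theta z p) has_field_derivative deriv (\<lambda>z. theta z p) (x / u)) (at (x / u))"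
    by (rule holomorphic_derivI[OF theta_holo[OF p1] open_nz]) (use u x in auto)
  have e1: "((\<lambda>x. x * u) has_field_derivative u) (at x)" by (auto intro!: derivative_eq_intros)
  have e2: "((\<lambda>x. x / u) has_field_derivative 1 / u) (at x)" using u by (auto intro!: derivative_eq_intros)
  show ?thesis by (rule DERIV_mult[OF DERIV_chain2[OF d1 e1] DERIV_chain2[OF d2 e2]])
qed

lemma core:
  fixes F :: "complex \<Rightarrow> complex"
  assumes p: "p \<noteq> 0" and p1: "norm p < 1" and hF: "F holomorphic_on - {0}"
    and feq: "\<And>x. x \<noteq> 0 \<Longrightarrow> F (p * x) = 1 / (x * x) * F x"
    and u: "u \<noteq> 0" and uu: "u * u \<notin> range (power_int p)"
    and Fu: "F u = 0" and Fu': "F (1 / u) = 0"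
    and y: "y \<noteq> 0" and Fy: "F y = 0" and ty1: "theta (y * u) p \<noteq> 0" and ty2: "theta (y / u) p \<noteq> 0"
    and x: "x \<noteq> 0"
  shows "F x = 0"
proof -
  define T where "T = (\<lambda>z. theta z p)"
  define D where "D = (\<lambda>x. theta (x * u) p * theta (x / u) p)"
  have hD: "D holomorphic_on - {0}" unfolding D_def by (rule pair_holo[OF p1 u])
  have Deq: "D (p * x) = 1 / (x * x) * D x" if "x \<noteq> 0" for x
    unfolding D_def using pair_p[OF p1 p u that] by (simp add: mult_ac)
  have Fz: "F (p powi k * w) = 0" if "F w = 0" "w \<noteq> 0" for k w
  proof (induct k rule: int_induct[where k=0])
    case base then show ?case using that by simp
  next
    case (step1 i)
    have e: "p powi (i + 1) * w = p * (p powi i * w)" using p by (simp add: power_int_add_1' mult_ac)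
    have "F (p * (p powi i * w)) = 1 / ((p powi i * w) * (p powi i * w)) * F (p powi i * w)"
      using feq[of "p powi i * w"] p that by simp
    then show ?case using step1 by (simp only: e) simp
  next
    case (step2 i)
    have e: "p powi i * w = p * (p powi (i - 1) * w)" using p power_int_minus_mult[of p i] by (simp add: mult_ac)
    have "F (p * (p powi (i - 1) * w)) = 1 / ((p powi (i - 1) * w) * (p powi (i - 1) * w)) * F (p powi (i - 1) * w)"
      using feq[of "p powi (i - 1) * w"] p that by simp
    then show ?case using step2 e p that by simp
  qed
  have Dz: "F x = 0 \<and> deriv D x \<noteq> 0" if x0: "x \<noteq> 0" and Dx: "D x = 0" for x
  proof -
    have dD: "deriv D x = (deriv T (x * u) * u) * theta (x / u) p + (deriv T (x / u) * (1 / u)) * theta (x * u) p"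
      unfolding D_def T_def by (rule DERIV_imp_deriv[OF pair_deriv[OF p1 u x0]])
    from Dx have "theta (x * u) p = 0 \<or> theta (x / u) p = 0" by (simp add: D_def)
    thus ?thesis
    proof
      assume t: "theta (x * u) p = 0"
      then obtain k where k: "x * u = p powi k" using theta_zeros[OF p1 p, of "x * u"] x0 u by auto
      have t2: "theta (x / u) p \<noteq> 0"
      proof
        assume "theta (x / u) p = 0"
        then obtain j where j: "x / u = p powi j" using theta_zeros[OF p1 p, of "x / u"] x0 u by auto
        have "u * u = (x * u) / (x / u)" using x0 u by (simp add: field_simps)
        also have "\<dots> = p powi (k - j)" using k j p by (simp add: power_int_diff)
        finally show False using uu by auto
      qed
      have "x = p powi k * (1 / u)" using k u by (simp add: field_simps)
      hence "F x = 0" using Fz[OF Fu'] u by simp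
      moreover have "deriv D x \<noteq> 0" using dD t t2 theta_pow[OF p1 p, of k] k u by (simp add: T_def)
      ultimately show ?thesis by simp
    next
      assume t: "theta (x / u) p = 0"
      then obtain k where k: "x / u = p powi k" using theta_zeros[OF p1 p, of "x / u"] x0 u by auto
      have t2: "theta (x * u) p \<noteq> 0"
      proof
        assume "theta (x * u) p = 0"
        then obtain j where j: "x * u = p powi j" using theta_zeros[OF p1 p, of "x * u"] x0 u by auto
        have "u * u = (x * u) / (x / u)" using x0 u by (simp add: field_simps)
        also have "\<dots> = p powi (j - k)" using k j p by (simp add: power_int_diff)
        finally show False using uu by auto
      qed
      have "x = p powi k * u" using k u by (simp add: field_simps)
      hence "F x = 0" using Fz[OF Fu] u by simp
      moreover have "deriv D x \<noteq> 0" using dD t t2 theta_pow[OF p1 p, of k] k u by (simp add: T_def)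
      ultimately show ?thesis by simp
    qed
  qed
  define R where "R = (\<lambda>x. if D x = 0 then deriv F x / deriv D x else F x / D x)"
  have hR: "R holomorphic_on - {0}" unfolding R_def
    by (rule div_holo[OF open_nz hF hD]) (use Dz in auto)
  have c_holo: "(\<lambda>x::complex. 1 / (x * x)) holomorphic_on - {0}" by (intro holomorphic_intros) auto
  have per: "R (p * x) = R x" if x0: "x \<noteq> 0" for x
  proof (cases "D x = 0")
    case False
    have "D (p * x) \<noteq> 0" using Deq[OF x0] False x0 by simp
    then show ?thesis using False Deq[OF x0] feq[OF x0] x0 by (simp add: R_def)
  next
    case True
    have "D (p * x) = 0" using Deq[OF x0] True by simp
    moreover have "F x = 0" using Dz[OF x0 True] by simp
    moreover have "deriv D x \<noteq> 0" using Dz[OF x0 True] by simp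
    moreover have "p * deriv F (p * x) = deriv (\<lambda>x. 1 / (x * x)) x * F x + 1 / (x * x) * deriv F x"
      by (rule deriv_funeq[OF hF c_holo p feq x0])
    moreover have "p * deriv D (p * x) = deriv (\<lambda>x. 1 / (x * x)) x * D x + 1 / (x * x) * deriv D x"
      by (rule deriv_funeq[OF hD c_holo p Deq x0])
    ultimately have e1: "(p * x * x) * deriv F (p * x) = deriv F x"
      and e2: "(p * x * x) * deriv D (p * x) = deriv D x" and dDx: "deriv D x \<noteq> 0"
      and Dpx: "D (p * x) = 0"
      using True p x0 by (simp_all add: field_simps)
    have "deriv D (p * x) \<noteq> 0" using e2 dDx by auto
    hence "deriv F (p * x) / deriv D (p * x) = ((p * x * x) * deriv F (p * x)) / ((p * x * x) * deriv D (p * x))"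
      using p x0 by simp
    also have "\<dots> = deriv F x / deriv D x" unfolding e1 e2 ..
    finally show ?thesis using True Dpx by (simp add: R_def)
  qed
  obtain c where c: "\<And>x. x \<noteq> 0 \<Longrightarrow> R x = c" using liouville_per[OF p p1 hR per] by blast
  have Dy: "D y \<noteq> 0" using ty1 ty2 by (simp add: D_def)
  have "c = 0" using c[OF y] Dy Fy by (simp add: R_def)
  show "F x = 0"
  proof (cases "D x = 0")
    case True then show ?thesis using Dz[OF x] by simp
  next
    case False then show ?thesis using c[OF x] \<open>c = 0\<close> by (simp add: R_def)
  qed
qed


lemma pair_inv:
  assumes p1: "norm p < 1" and a: "a \<noteq> 0" and u: "u \<noteq> 0"
  shows "theta (1 / u * a) p * theta (1 / u / a) p = 1 / (u * u) * (theta (u * a) p * theta (u / a) p)"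
proof -
  have 1: "theta (1 / u * a) p = - (a / u) * theta (u / a) p"
    using theta_inv[OF p1, of "u / a"] a u by simp
  have 2: "theta (1 / u / a) p = - (1 / (u * a)) * theta (u * a) p"
    using theta_inv[OF p1, of "u * a"] a u by (simp add: divide_divide_eq_left)
  show ?thesis unfolding 1 2 using a u by (simp add: field_simps)
qed

lemma W_gen:
  assumes p: "p \<noteq> 0" and p1: "norm p < 1" and x: "x \<noteq> 0" and y: "y \<noteq> 0" and u: "u \<noteq> 0" and v: "v \<noteq> 0"
    and uu: "u * u \<notin> range (power_int p)" and ty1: "theta (y * u) p \<noteq> 0" and ty2: "theta (y / u) p \<noteq> 0"
  shows "theta (x * y) p * theta (x / y) p * theta (u * v) p * theta (u / v) p
       - theta (x * v) p * theta (x / v) p * theta (u * y) p * theta (u / y) p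
       = u / y * theta (y * v) p * theta (y / v) p * theta (x * u) p * theta (x / u) p"
proof -
  define P where "P = (\<lambda>a x. theta (x * a) p * theta (x / a) p)"
  define A where "A = theta (u * v) p * theta (u / v) p"
  define B where "B = theta (u * y) p * theta (u / y) p"
  define C where "C = u / y * theta (y * v) p * theta (y / v) p"
  define F where "F = (\<lambda>x. A * P y x - B * P v x - C * P u x)"
  have t1: "theta 1 p = 0" by (rule theta_1[OF p1])
  have hF: "F holomorphic_on - {0}" unfolding F_def P_def
    by (intro holomorphic_intros pair_holo[OF p1] y u v)
  have feq: "F (p * x) = 1 / (x * x) * F x" if x0: "x \<noteq> 0" for x
    unfolding F_def P_def using pair_p[OF p1 p y x0] pair_p[OF p1 p v x0] pair_p[OF p1 p u x0]
    by (simp add: algebra_simps)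
  have Fu: "F u = 0" unfolding F_def P_def A_def B_def using u t1 by (simp add: mult_ac)
  have Fu': "F (1 / u) = 0" unfolding F_def P_def A_def B_def
    using pair_inv[OF p1 y u] pair_inv[OF p1 v u] u t1 by (simp add: mult_ac)
  have Fy: "F y = 0"
  proof -
    have h: "theta (y / u) p = - (y / u) * theta (u / y) p"
      using theta_inv[OF p1, of "u / y"] y u by simp
    show ?thesis unfolding F_def P_def A_def B_def C_def h using y u t1 by (simp add: field_simps)
  qed
  have "F x = 0" by (rule core[OF p p1 hF feq u uu Fu Fu' y Fy ty1 ty2 x])
  thus ?thesis unfolding F_def P_def A_def B_def C_def by (simp add: algebra_simps)
qed

lemma W_0:
  assumes x: "x \<noteq> 0" and y: "y \<noteq> 0" and u: "u \<noteq> 0" and v: "v \<noteq> 0"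
  shows "theta (x * y) 0 * theta (x / y) 0 * theta (u * v) 0 * theta (u / v) 0
       - theta (x * v) 0 * theta (x / v) 0 * theta (u * y) 0 * theta (u / y) 0
       = u / y * theta (y * v) 0 * theta (y / v) 0 * theta (x * u) 0 * theta (x / u) 0"
  using assms by (simp add: theta_p0 field_simps)


lemma countable_bad:
  fixes p y :: complex
  assumes y: "y \<noteq> 0"
  shows "countable ({u. u * u \<in> range (power_int p)} \<union> {u. y * u \<in> range (power_int p)}
                    \<union> {u. y / u \<in> range (power_int p)})"
proof -
  define Z where "Z = range (power_int p)"
  have cZ: "countable Z" unfolding Z_def by simp
  have 1: "{u. u * u \<in> Z} \<subseteq> (\<Union>w\<in>Z. {csqrt w, - csqrt w})"
  proof
    fix u assume "u \<in> {u. u * u \<in> Z}"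
    hence "u * u \<in> Z" by simp
    moreover have "u\<^sup>2 = (csqrt (u * u))\<^sup>2" using power2_csqrt[of "u * u"] by (simp add: power2_eq_square)
    hence "u = csqrt (u * u) \<or> u = - csqrt (u * u)" by (rule power2_eq_iff[THEN iffD1])
    ultimately show "u \<in> (\<Union>w\<in>Z. {csqrt w, - csqrt w})" by blast
  qed
  have 2: "{u. y * u \<in> Z} \<subseteq> (\<lambda>w. w / y) ` Z"
  proof
    fix u assume "u \<in> {u. y * u \<in> Z}"
    thus "u \<in> (\<lambda>w. w / y) ` Z" using y
      by (auto intro!: image_eqI[of _ _ "y * u"])
  qed
  have 3: "{u. y / u \<in> Z} \<subseteq> (\<lambda>w. y / w) ` Z \<union> {0}"
  proof
    fix u assume "u \<in> {u. y / u \<in> Z}"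
    thus "u \<in> (\<lambda>w. y / w) ` Z \<union> {0}" using y
      by (cases "u = 0") (auto intro!: image_eqI[of _ _ "y / u"])
  qed
  have c1: "countable {u. u * u \<in> Z}" by (rule countable_subset[OF 1]) (intro countable_UN cZ; simp)
  have c2: "countable {u. y * u \<in> Z}" by (rule countable_subset[OF 2]) (simp add: cZ)
  have c3: "countable {u. y / u \<in> Z}" by (rule countable_subset[OF 3]) (simp add: cZ)
  show ?thesis using c1 c2 c3 by (simp add: Z_def)
qed


lemma theta_comp:
  assumes p1: "norm p < 1" and hf: "f holomorphic_on S" and nz: "\<And>z. z \<in> S \<Longrightarrow> f z \<noteq> 0"
  shows "(\<lambda>z. theta (f z) p) holomorphic_on S"
  by (rule holomorphic_on_compose_gen[OF hf theta_holo[OF p1], unfolded o_def]) (use nz in auto)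

lemma W_all:
  assumes p1: "norm p < 1" and x: "x \<noteq> 0" and y: "y \<noteq> 0" and u: "u \<noteq> 0" and v: "v \<noteq> 0"
  shows "theta (x * y) p * theta (x / y) p * theta (u * v) p * theta (u / v) p
       - theta (x * v) p * theta (x / v) p * theta (u * y) p * theta (u / y) p
       = u / y * theta (y * v) p * theta (y / v) p * theta (x * u) p * theta (x / u) p"
proof (cases "p = 0")
  case True
  then show ?thesis using W_0[OF x y u v] by simp
next
  case p: False
  define G where "G = (\<lambda>u. theta (x * y) p * theta (x / y) p * theta (u * v) p * theta (u / v) p
       - theta (x * v) p * theta (x / v) p * theta (u * y) p * theta (u / y) p
       - u / y * theta (y * v) p * theta (y / v) p * theta (x * u) p * theta (x / u) p)"
  define Bad where "Bad = {u. u * u \<in> range (power_int p)} \<union> {u. y * u \<in> range (power_int p)}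
                    \<union> {u. y / u \<in> range (power_int p)}"
  have cB: "countable Bad" unfolding Bad_def by (rule countable_bad[OF y])
  have hG: "G holomorphic_on - {0}" unfolding G_def
    by (intro holomorphic_intros theta_comp[OF p1]) (use x y v in auto)
  have good: "G w = 0" if w: "w \<noteq> 0" "w \<notin> Bad" for w
  proof -
    have "theta (y * w) p \<noteq> 0" using theta_zeros[OF p1 p, of "y * w"] w y by (auto simp: Bad_def)
    moreover have "theta (y / w) p \<noteq> 0" using theta_zeros[OF p1 p, of "y / w"] w y by (auto simp: Bad_def)
    moreover have "w * w \<notin> range (power_int p)" using w by (auto simp: Bad_def)
    ultimately show ?thesis using W_gen[OF p p1 x y w(1) v] by (simp add: G_def)
  qed
  have "G u = 0"
  proof (rule ccontr)
    assume G0: "G u \<noteq> 0"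
    have "isCont G u"
      using holomorphic_on_imp_continuous_on[OF hG] u
      by (metis ComplI continuous_on_eq_continuous_at open_nz singletonD)
    then obtain d where d: "d > 0" "\<And>w. dist w u < d \<Longrightarrow> dist (G w) (G u) < norm (G u)"
      using G0 unfolding continuous_at_eps_delta by (metis zero_less_norm_iff)
    define r where "r = min d (norm u)"
    have r: "r > 0" using d u by (simp add: r_def)
    have "\<not> ball u r \<subseteq> Bad" using uncountable_ball[OF r, of u] cB countable_subset by blast
    then obtain w where w: "w \<in> ball u r" "w \<notin> Bad" by blast
    have "w \<noteq> 0" using w(1) by (auto simp: r_def dist_norm)
    hence "G w = 0" using good w by blast
    moreover have "dist w u < d" using w(1) by (auto simp: r_def dist_commute)
    ultimately show False using d(2)[of w] by simp
  qed
  thus ?thesis by (simp add: G_def)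
qed

lemma KI_alg:
  fixes a b c d e f g ta tEFi tFG tEG tga tA taf tae tbc tbd tcd tad tac tab te tf tg tEF tb tc td tag tB tBCDa tBCa tCDa :: complex
  assumes nz: "a \<noteq> 0" "b \<noteq> 0" "c \<noteq> 0" "d \<noteq> 0" "e \<noteq> 0" "f \<noteq> 0" "g \<noteq> 0"
    and nzt: "tab \<noteq> 0" "tac \<noteq> 0" "tad \<noteq> 0" "tae \<noteq> 0" "taf \<noteq> 0" "tag \<noteq> 0" "tA \<noteq> 0" "tEF \<noteq> 0" "tFG \<noteq> 0" "tEG \<noteq> 0" "tga \<noteq> 0"
    and hg: "a ^ 3 = b * c * d * e * f * g"
    and inv1: "tga = - (a ^ 2 / (b * c * d * e * f)) * tag"
    and inv2: "tEFi = - (a / (e * f)) * tEF"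
    and inv3: "tBCDa = - (b * c * d / a) * tB"
    and inv4: "tBCa = - (b * c / a) * tbc"
    and inv5: "tCDa = - (c * d / a) * tcd"
    and W1: "tA * taf * tga * tae - tEG * ta * tFG * tEFi = a / (e * f) * (tB * tf * tg * te)"
    and W2: "tc * td * tb * tA - tBCDa * tab * tad * tac = a / c * (tBCa * tbd * ta * tCDa)"
  shows "(ta * tEFi * tFG * tEG) / (tga * tA * taf * tae)
          * (1 - (tbc * tbd * tcd) / (tad * tac * tab) * ((te * tf * tg) / (tFG * tEG * tEF)))
        = 1 - (tb * tc * td * te * tf * tg) / (tab * tac * tad * tae * taf * tag)"
proof -
  define D where "D = tga * tA * taf * tae"
  have D0: "D \<noteq> 0" using nzt by (simp add: D_def)
  define U where "U = (ta * tEFi * tFG * tEG) / D"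
  have s1: "1 - U = a / (e * f) * (tB * tf * tg * te) / D"
  proof -
    have "1 - U = (D - ta * tEFi * tFG * tEG) / D" using D0 by (simp add: U_def field_simps)
    also have "D - ta * tEFi * tFG * tEG = a / (e * f) * (tB * tf * tg * te)"
      using W1 by (simp add: D_def mult_ac)
    finally show ?thesis .
  qed
  have gdef: "g = a ^ 3 / (b * c * d * e * f)" using hg nz by (simp add: field_simps)
  have tBdef: "tB = ((b * c * d / a) * ta * tbc * tbd * tcd - tb * tc * td * tA) / ((b * c * d / a) * tab * tac * tad)"
  proof -
    define K where "K = b * c * d / a"
    have K0: "K \<noteq> 0" using nz by (simp add: K_def)
    have h: "tc * td * tb * tA + K * tB * tab * tad * tac = K * ta * tbc * tbd * tcd"
      using W2 unfolding inv3 inv4 inv5 K_def using nz by (simp add: field_simps)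
    have M0: "K * tab * tac * tad \<noteq> 0" using K0 nzt by simp
    have "tB * (K * tab * tac * tad) = K * ta * tbc * tbd * tcd - tb * tc * td * tA"
      using h by (simp add: algebra_simps)
    hence "tB = (K * ta * tbc * tbd * tcd - tb * tc * td * tA) / (K * tab * tac * tad)"
      using M0 by (simp add: eq_divide_eq)
    thus ?thesis by (simp add: K_def)
  qed
  have X: "tb * tc * td / (tab * tac * tad * tae * taf * tag)
      - ta * tEFi * tbc * tbd * tcd / (D * tab * tac * tad * tEF) = a / (e * f) * tB / D"
    unfolding D_def inv1 inv2 tBdef gdef using nz nzt by (simp add: field_simps) (simp add: eval_nat_numeral algebra_simps)
  define V where "V = (tbc * tbd * tcd) / (tad * tac * tab) * ((te * tf * tg) / (tFG * tEG * tEF))"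
  define z where "z = (tb * tc * td * te * tf * tg) / (tab * tac * tad * tae * taf * tag)"
  have UV: "U * V = te * tf * tg * (ta * tEFi * tbc * tbd * tcd / (D * tab * tac * tad * tEF))"
    unfolding U_def V_def using nzt D0 by (simp add: field_simps)
  have Z: "z = te * tf * tg * (tb * tc * td / (tab * tac * tad * tae * taf * tag))"
    unfolding z_def by (simp add: mult_ac)
  have "z - U * V = te * tf * tg * (a / (e * f) * tB / D)"
    unfolding UV Z X[symmetric] by (simp add: algebra_simps)
  also have "\<dots> = 1 - U" unfolding s1 by (simp add: mult_ac)
  finally have "U * (1 - V) = 1 - z" by (simp add: algebra_simps)
  thus ?thesis by (simp add: U_def V_def z_def D_def)
qed


lemma W_subst:
  assumes p1: "norm p < 1" and x: "x \<noteq> 0" and y: "y \<noteq> 0" and u: "u \<noteq> 0" and v: "v \<noteq> 0"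
    and "x * y = a1" "x / y = a2" "u * v = a3" "u / v = a4" "x * v = a5" "x / v = a6" "u * y = a7" "u / y = a8"
        "y * v = a9" "y / v = a10" "x * u = a11" "x / u = a12"
  shows "theta a1 p * theta a2 p * theta a3 p * theta a4 p - theta a5 p * theta a6 p * theta a7 p * theta a8 p
       = a8 * (theta a9 p * theta a10 p * theta a11 p * theta a12 p)"
  using W_all[OF p1 x y u v] assms(6-) by (simp add: mult_ac)

lemma KI:
  fixes a b c d e f g p :: complex
  assumes p1: "norm p < 1"
    and nz: "a \<noteq> 0" "b \<noteq> 0" "c \<noteq> 0" "d \<noteq> 0" "e \<noteq> 0" "f \<noteq> 0" "g \<noteq> 0"
    and hg: "a ^ 3 = b * c * d * e * f * g"
    and wd1: "thetas [a / b, a / c, a / d, a / e, a / f, b * c * d * e * f / a ^ 2] p \<noteq> 0"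
    and wd2: "thetas [a ^ 2 / (b * c * d * e * f), a ^ 2 / (b * c * d), a / f, a / e] p \<noteq> 0"
    and wd3: "thetas [a / d, a / c, a / b] p \<noteq> 0"
    and wd4: "thetas [a ^ 2 / (b * c * d * e), a ^ 2 / (b * c * d * f), a ^ 2 / (b * c * d * g)] p \<noteq> 0"
  shows "thetas [a, a / (e * f), a ^ 2 / (b * c * d * e), a ^ 2 / (b * c * d * f)] p
          / thetas [a ^ 2 / (b * c * d * e * f), a ^ 2 / (b * c * d), a / f, a / e] p
          * (1 - thetas [a / (b * c), a / (b * d), a / (c * d)] p / thetas [a / d, a / c, a / b] p
               * (thetas [e, f, g] p / thetas [a ^ 2 / (b * c * d * e), a ^ 2 / (b * c * d * f), a ^ 2 / (b * c * d * g)] p))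
       = 1 - thetas [b, c, d, e, f, a ^ 3 / (b * c * d * e * f)] p
             / thetas [a / b, a / c, a / d, a / e, a / f, b * c * d * e * f / a ^ 2] p"
proof -
  let ?T = "\<lambda>w. theta w p"
  have g3: "a ^ 3 / (b * c * d * e * f) = g" using hg nz by (simp add: field_simps)
  have inv1: "?T (a ^ 2 / (b * c * d * e * f)) = - (a ^ 2 / (b * c * d * e * f)) * ?T (b * c * d * e * f / a ^ 2)"
    using theta_inv[OF p1, of "b * c * d * e * f / a ^ 2"] nz by simp
  have e2: "1 / (a ^ 2 / (b * c * d * g)) = a / (e * f)" using hg nz by (simp add: field_simps power2_eq_square power3_eq_cube)
  have inv2: "?T (a / (e * f)) = - (a / (e * f)) * ?T (a ^ 2 / (b * c * d * g))"
    using theta_inv[OF p1, of "a ^ 2 / (b * c * d * g)"] nz unfolding e2 by simp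
  have inv3: "?T (b * c * d / a) = - (b * c * d / a) * ?T (a / (b * c * d))"
    using theta_inv[OF p1, of "a / (b * c * d)"] nz by simp
  have inv4: "?T (b * c / a) = - (b * c / a) * ?T (a / (b * c))"
    using theta_inv[OF p1, of "a / (b * c)"] nz by simp
  have inv5: "?T (c * d / a) = - (c * d / a) * ?T (a / (c * d))"
    using theta_inv[OF p1, of "a / (c * d)"] nz by simp
  obtain s where s: "s * s = e * g" using power2_csqrt[of "e * g"] by (metis power2_eq_square)
  have s0: "s \<noteq> 0" using s nz by auto
  have gs: "g = s ^ 2 / e" using s nz by (simp add: field_simps power2_eq_square)
  have bs: "b = a ^ 3 / (c * d * f * s ^ 2)" using hg s nz by (simp add: field_simps power2_eq_square)
  have W1: "?T (a ^ 2 / (b * c * d)) * ?T (a / f) * ?T (a ^ 2 / (b * c * d * e * f)) * ?T (a / e)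
      - ?T (a ^ 2 / (b * c * d * f)) * ?T a * ?T (a ^ 2 / (b * c * d * e)) * ?T (a / (e * f))
      = a / (e * f) * (?T (a / (b * c * d)) * ?T f * ?T g * ?T e)"
    by (rule W_subst[OF p1, of s "e * f * g / (a * s)" "s / e" "g * e / (a * s)"])
       (use nz s0 in \<open>simp_all add: gs bs field_simps power2_eq_square power3_eq_cube\<close>)
  obtain t where t: "t * t = c * d" using power2_csqrt[of "c * d"] by (metis power2_eq_square)
  have t0: "t \<noteq> 0" using t nz by auto
  have dt: "d = t ^ 2 / c" using t nz by (simp add: field_simps power2_eq_square)
  have W2: "?T c * ?T d * ?T b * ?T (a ^ 2 / (b * c * d)) - ?T (b * c * d / a) * ?T (a / b) * ?T (a / d) * ?T (a / c)
      = a / c * (?T (b * c / a) * ?T (a / (b * d)) * ?T a * ?T (c * d / a))"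
    by (rule W_subst[OF p1, of t "c / t" "a / t" "b * t / a"])
       (use nz t0 in \<open>simp_all add: dt field_simps power2_eq_square\<close>)
  have nzs: "?T (a / b) \<noteq> 0" "?T (a / c) \<noteq> 0" "?T (a / d) \<noteq> 0" "?T (a / e) \<noteq> 0" "?T (a / f) \<noteq> 0"
     "?T (b * c * d * e * f / a ^ 2) \<noteq> 0" "?T (a ^ 2 / (b * c * d)) \<noteq> 0" "?T (a ^ 2 / (b * c * d * g)) \<noteq> 0"
     "?T (a ^ 2 / (b * c * d * e)) \<noteq> 0" "?T (a ^ 2 / (b * c * d * f)) \<noteq> 0" "?T (a ^ 2 / (b * c * d * e * f)) \<noteq> 0"
    using wd1 wd2 wd3 wd4 by (auto simp: thetas_def)
  note main = KI_alg[OF nz nzs(1,2,3,4,5,6,7,8,9,10,11) hg inv1 inv2 inv3 inv4 inv5 W1 W2]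
  show ?thesis using main unfolding g3 by (simp add: thetas_def mult_ac)
qed




lemma gprod_step:
  assumes nz: "\<And>j. z j \<noteq> 0"
  shows "gprod z (k + 1) = gprod z k * z k"
proof -
  consider "k \<ge> 0" | "k = -1" | "k < -1" by linarith
  thus ?thesis
  proof cases
    case 1
    have "{0..<k + 1} = insert k {0..<k}" using 1 by auto
    thus ?thesis using 1 by (simp add: gprod_def mult.commute)
  next
    case 2
    thus ?thesis using nz[of "-1"] by (simp add: gprod_def)
  next
    case 3
    have e: "{k..-1} = insert k {k + 1..-1}" using 3 by auto
    have "gprod z k * z k = inverse (z k * (\<Prod>j\<in>{k + 1..-1}. z j)) * z k"
      using 3 by (simp add: gprod_def e)
    also have "\<dots> = inverse (\<Prod>j\<in>{k + 1..-1}. z j)" using nz[of k] by (simp add: field_simps)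
    finally show ?thesis using 3 by (simp add: gprod_def)
  qed
qed

lemma gprod_pos:
  assumes nz: "\<And>j. z j \<noteq> 0"
  shows "gprod z (int n) = (\<Prod>i<n. z (int i))"
proof (induct n)
  case 0 then show ?case by (simp add: gprod_def)
next
  case (Suc n)
  have "gprod z (int (Suc n)) = gprod z (int n + 1)" by (simp add: add.commute)
  also have "\<dots> = gprod z (int n) * z (int n)" by (rule gprod_step[OF nz])
  finally show ?case using Suc by simp
qed

lemma gprod_neg:
  assumes nz: "\<And>j. z j \<noteq> 0"
  shows "gprod z (- int m) = (\<Prod>i<m. inverse (z (- int i - 1)))"
proof (induct m)
  case 0 then show ?case by (simp add: gprod_def)
next
  case (Suc m)
  have "gprod z (- int m - 1 + 1) = gprod z (- int m - 1) * z (- int m - 1)"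
    by (rule gprod_step[OF nz])
  hence "gprod z (- int m) = gprod z (- int m - 1) * z (- int m - 1)" by simp
  hence "gprod z (- int m - 1) = gprod z (- int m) * inverse (z (- int m - 1))"
    using nz[of "- int m - 1"] by (simp add: field_simps)
  moreover have e: "- int (Suc m) = - int m - 1" by simp
  ultimately show ?case using Suc unfolding e by (simp only: prod.lessThan_Suc)
qed

lemma tele:
  fixes h :: "int \<Rightarrow> complex"
  shows "(\<Sum>k\<in>{i..i + int N}. h k - h (k + 1)) = h i - h (i + int N + 1)"
proof (induct N)
  case 0 then show ?case by simp
next
  case (Suc N)
  have e: "{i..i + int (Suc N)} = insert (i + int N + 1) {i..i + int N}" by auto
  show ?case unfolding e using Suc by (simp add: algebra_simps)
qed

lemma sum_split:
  fixes f :: "int \<Rightarrow> complex"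
  shows "(\<Sum>k\<in>{- int m..int n}. f k) = (\<Sum>i<m. f (- int i - 1)) + (\<Sum>k<Suc n. f (int k))"
proof (induct m)
  case 0
  have e: "{0..int n} = int ` {..<Suc n}"
  proof (rule set_eqI)
    fix x :: int
    show "x \<in> {0..int n} \<longleftrightarrow> x \<in> int ` {..<Suc n}"
    proof
      assume x: "x \<in> {0..int n}"
      hence "x = int (nat x)" "nat x \<in> {..<Suc n}" by auto
      thus "x \<in> int ` {..<Suc n}" by (rule image_eqI)
    qed auto
  qed
  show ?case by (simp add: e sum.reindex)
next
  case (Suc m)
  have e: "{- int (Suc m)..int n} = insert (- int m - 1) {- int m..int n}" by auto
  show ?case unfolding e using Suc by (simp add: algebra_simps)
qed

lemma split_conv:
  fixes A B :: "nat \<Rightarrow> complex"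
  assumes lim: "((\<lambda>(m, n). A m + B n) \<longlongrightarrow> L) (sequentially \<times>\<^sub>F sequentially)"
  shows "convergent A" "convergent B"
proof -
  have ev: "\<exists>N. \<forall>m\<ge>N. \<forall>n\<ge>N. dist (A m + B n) L < e" if e: "e > 0" for e
  proof -
    have "\<forall>\<^sub>F x in sequentially \<times>\<^sub>F sequentially. dist ((\<lambda>(m, n). A m + B n) x) L < e"
      using tendstoD[OF lim e] .
    then obtain N where N: "\<forall>m\<ge>N. \<forall>n\<ge>N. dist ((\<lambda>(m, n). A m + B n) (n, m)) L < e"
      unfolding eventually_prod_sequentially by blast
    show ?thesis using N by (intro exI[of _ N]) auto
  qed
  have "Cauchy A"
  proof (rule metric_CauchyI)
    fix e :: real assume e: "e > 0"
    obtain N where N: "\<forall>m\<ge>N. \<forall>n\<ge>N. dist (A m + B n) L < e / 2" using ev[of "e/2"] e by auto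
    show "\<exists>M. \<forall>m\<ge>M. \<forall>n\<ge>M. dist (A m) (A n) < e"
    proof (intro exI allI impI)
      fix m n assume "m \<ge> N" "n \<ge> N"
      hence "dist (A m + B N) L < e / 2" "dist (A n + B N) L < e / 2" using N by auto
      moreover have "dist (A m) (A n) \<le> dist (A m + B N) L + dist (A n + B N) L"
      proof -
        have "dist (A m) (A n) = norm ((A m + B N - L) - (A n + B N - L))" by (simp add: dist_norm)
        also have "\<dots> \<le> norm (A m + B N - L) + norm (A n + B N - L)" by (rule norm_triangle_ineq4)
        finally show ?thesis by (simp add: dist_norm)
      qed
      ultimately show "dist (A m) (A n) < e" by linarith
    qed
  qed
  thus "convergent A" by (simp add: Cauchy_convergent_iff)
  have "Cauchy B"
  proof (rule metric_CauchyI)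
    fix e :: real assume e: "e > 0"
    obtain N where N: "\<forall>m\<ge>N. \<forall>n\<ge>N. dist (A m + B n) L < e / 2" using ev[of "e/2"] e by auto
    show "\<exists>M. \<forall>m\<ge>M. \<forall>n\<ge>M. dist (B m) (B n) < e"
    proof (intro exI allI impI)
      fix m n assume "m \<ge> N" "n \<ge> N"
      hence "dist (A N + B m) L < e / 2" "dist (A N + B n) L < e / 2" using N by auto
      moreover have "dist (B m) (B n) \<le> dist (A N + B m) L + dist (A N + B n) L"
      proof -
        have "dist (B m) (B n) = norm ((A N + B m - L) - (A N + B n - L))" by (simp add: dist_norm)
        also have "\<dots> \<le> norm (A N + B m - L) + norm (A N + B n - L)" by (rule norm_triangle_ineq4)
        finally show ?thesis by (simp add: dist_norm)
      qed
      ultimately show "dist (B m) (B n) < e" by linarith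
    qed
  qed
  thus "convergent B" by (simp add: Cauchy_convergent_iff)
qed

lemma has_prod_from_lim:
  fixes f :: "nat \<Rightarrow> complex"
  assumes "(\<lambda>n. \<Prod>i<n. f i) \<longlonglongrightarrow> P" "P \<noteq> 0"
  shows "f has_prod P"
proof -
  have "(\<lambda>n. \<Prod>i<Suc n. f i) \<longlonglongrightarrow> P" using assms(1) by (rule LIMSEQ_Suc)
  hence "(\<lambda>n. \<Prod>i\<le>n. f (i + 0)) \<longlonglongrightarrow> P" by (simp add: lessThan_Suc_atMost)
  hence "raw_has_prod f 0 P" using assms(2) by (simp add: raw_has_prod_def)
  thus ?thesis by (auto simp: has_prod_def)
qed

theorem mainTheorem5:
  fixes p :: complex and a b c d e f g :: "int \<Rightarrow> complex"
  assumes hp: "norm p < 1"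
    and nz: "\<And>k. a k \<noteq> 0 \<and> b k \<noteq> 0 \<and> c k \<noteq> 0 \<and> d k \<noteq> 0 \<and> e k \<noteq> 0 \<and> f k \<noteq> 0 \<and> g k \<noteq> 0"
    and hg: "\<And>k. a k ^ 3 = b k * c k * d k * e k * f k * g k"
    and wd1: "\<And>k. thetas [a k / b k, a k / c k, a k / d k, a k / e k, a k / f k,
                      b k * c k * d k * e k * f k / a k ^ 2] p \<noteq> 0"
    and wd2: "\<And>k. thetas [a k ^ 2 / (b k * c k * d k * e k * f k), a k ^ 2 / (b k * c k * d k),
                      a k / f k, a k / e k] p \<noteq> 0"
    and wd3: "\<And>k. thetas [a k / d k, a k / c k, a k / b k] p \<noteq> 0"
    and wd4: "\<And>k. thetas [a k ^ 2 / (b k * c k * d k * e k), a k ^ 2 / (b k * c k * d k * f k),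
                      a k ^ 2 / (b k * c k * d k * g k)] p \<noteq> 0"
    and z_def: "\<And>k. z k = thetas [b k, c k, d k, e k, f k, a k ^ 3 / (b k * c k * d k * e k * f k)] p
                      / thetas [a k / b k, a k / c k, a k / d k, a k / e k, a k / f k,
                                b k * c k * d k * e k * f k / a k ^ 2] p"
    and re_pos: "\<And>k. Re (z k) > 0"
    and log_conv: "\<exists>L. bilateral_sums (\<lambda>k. Ln (z k)) L"
  shows "bilateral_sums
     (\<lambda>k. thetas [a k, a k / (e k * f k), a k ^ 2 / (b k * c k * d k * e k),
                   a k ^ 2 / (b k * c k * d k * f k)] p
          / thetas [a k ^ 2 / (b k * c k * d k * e k * f k), a k ^ 2 / (b k * c k * d k),
                    a k / f k, a k / e k] p
          * gprod z k
          * (1 - thetas [a k / (b k * c k), a k / (b k * d k), a k / (c k * d k)] p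
                 / thetas [a k / d k, a k / c k, a k / b k] p
               * (thetas [e k, f k, g k] p
                 / thetas [a k ^ 2 / (b k * c k * d k * e k), a k ^ 2 / (b k * c k * d k * f k),
                           a k ^ 2 / (b k * c k * d k * g k)] p)))
     ((\<Prod>n. inverse (z (- int n - 1))) - (\<Prod>n. z (int n)))"
proof -
  have znz: "z k \<noteq> 0" for k using re_pos[of k] by auto
  define T where "T = (\<lambda>k. thetas [a k, a k / (e k * f k), a k ^ 2 / (b k * c k * d k * e k),
                   a k ^ 2 / (b k * c k * d k * f k)] p
          / thetas [a k ^ 2 / (b k * c k * d k * e k * f k), a k ^ 2 / (b k * c k * d k),
                    a k / f k, a k / e k] p
          * gprod z k
          * (1 - thetas [a k / (b k * c k), a k / (b k * d k), a k / (c k * d k)] p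
                 / thetas [a k / d k, a k / c k, a k / b k] p
               * (thetas [e k, f k, g k] p
                 / thetas [a k ^ 2 / (b k * c k * d k * e k), a k ^ 2 / (b k * c k * d k * f k),
                           a k ^ 2 / (b k * c k * d k * g k)] p)))"
  have Tk: "T k = gprod z k - gprod z (k + 1)" for k
  proof -
    have nzk: "a k \<noteq> 0" "b k \<noteq> 0" "c k \<noteq> 0" "d k \<noteq> 0" "e k \<noteq> 0" "f k \<noteq> 0" "g k \<noteq> 0"
      using nz[of k] by auto
    note ki = KI[OF hp nzk hg[of k] wd1[of k] wd2[of k] wd3[of k] wd4[of k], folded z_def]
    have "T k = gprod z k * (1 - z k)" unfolding T_def ki[symmetric] by (simp add: mult_ac)
    also have "\<dots> = gprod z k - gprod z (k + 1)" using gprod_step[OF znz, where k=k] by (simp add: algebra_simps)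
    finally show ?thesis .
  qed
  define F1 where "F1 = (\<lambda>m. \<Prod>i<m. inverse (z (- int i - 1)))"
  define F2 where "F2 = (\<lambda>n. \<Prod>i<n. z (int i))"
  have psum: "(\<Sum>k\<in>{- int m..int n}. T k) = F1 m - F2 (Suc n)" for m n
  proof -
    have e: "{- int m..int n} = {- int m..- int m + int (m + n)}" by simp
    have "(\<Sum>k\<in>{- int m..int n}. T k) = gprod z (- int m) - gprod z (- int m + int (m + n) + 1)"
      unfolding e Tk by (rule tele)
    also have "- int m + int (m + n) + 1 = int (Suc n)" by simp
    finally show ?thesis unfolding F1_def F2_def gprod_neg[OF znz] gprod_pos[OF znz] .
  qed
  obtain L where L: "bilateral_sums (\<lambda>k. Ln (z k)) L" using log_conv by blast
  define A where "A = (\<lambda>m. \<Sum>i<m. Ln (z (- int i - 1)))"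
  define B where "B = (\<lambda>n. \<Sum>k<n. Ln (z (int k)))"
  have "((\<lambda>(m, n). A m + B (Suc n)) \<longlongrightarrow> L) (sequentially \<times>\<^sub>F sequentially)"
    using L unfolding bilateral_sums_def sum_split A_def B_def .
  from split_conv[OF this] have cA: "convergent A" and cB: "convergent (\<lambda>n. B (Suc n))" by auto
  obtain LA where LA: "A \<longlonglongrightarrow> LA" using cA by (auto simp: convergent_def)
  obtain LB where LB: "B \<longlonglongrightarrow> LB" using cB LIMSEQ_imp_Suc by (auto simp: convergent_def)
  have F2e: "F2 n = exp (B n)" for n
    unfolding F2_def B_def by (simp add: exp_sum znz)
  have F1e: "F1 m = inverse (exp (A m))" for m
  proof -
    have "exp (A m) = (\<Prod>i<m. z (- int i - 1))" unfolding A_def by (simp add: exp_sum znz)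
    hence "inverse (exp (A m)) = (\<Prod>i<m. (inverse \<circ> (\<lambda>i. z (- int i - 1))) i)"
      by (simp only: prod_inversef)
    thus ?thesis by (simp add: F1_def)
  qed
  have F2l: "F2 \<longlonglongrightarrow> exp LB" unfolding F2e[abs_def] by (intro tendsto_intros LB)
  have F1l: "F1 \<longlonglongrightarrow> inverse (exp LA)" unfolding F1e[abs_def] by (intro tendsto_intros LA) simp
  have P2: "(\<Prod>n. z (int n)) = exp LB"
    using has_prod_unique[OF has_prod_from_lim[OF F2l[unfolded F2_def]]] by simp
  have P1: "(\<Prod>n. inverse (z (- int n - 1))) = inverse (exp LA)"
    using has_prod_unique[OF has_prod_from_lim[OF F1l[unfolded F1_def]]] by simp
  have lim1: "((\<lambda>x. F1 (fst x)) \<longlongrightarrow> inverse (exp LA)) (sequentially \<times>\<^sub>F sequentially)"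
    by (rule filterlim_compose[OF F1l filterlim_fst])
  have lim2: "((\<lambda>x. F2 (Suc (snd x))) \<longlongrightarrow> exp LB) (sequentially \<times>\<^sub>F sequentially)"
    by (rule filterlim_compose[OF LIMSEQ_Suc[OF F2l] filterlim_snd])
  have "((\<lambda>x. F1 (fst x) - F2 (Suc (snd x))) \<longlongrightarrow> inverse (exp LA) - exp LB) (sequentially \<times>\<^sub>F sequentially)"
    by (rule tendsto_diff[OF lim1 lim2])
  hence "bilateral_sums T (inverse (exp LA) - exp LB)"
    unfolding bilateral_sums_def psum case_prod_unfold .
  thus ?thesis unfolding P1 P2 T_def .
qed

end
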